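(* Every discrete loss $\ell:\mathcal{R}\to\mathbb{R}^{\mathcal{Y}}_+$ is embedded by some polyhedral loss $L:\mathbb{R}^d\to\mathbb{R}^{\mathcal{Y}}_+$ (for some $d$).
   Context: $\mathcal{Y}$ is a finite set of labels; $\mathbb{R}^{\mathcal{Y}}_+$ is the nonnegative orthant; $\Delta_{\mathcal{Y}}$ is the probability simplex on $\mathcal{Y}$. A loss is a map $L:\mathcal{R}\to\mathbb{R}^{\mathcal{Y}}_+$; expected loss under $p$ is $\langle p,L(r)\rangle$. A loss is discrete if $\mathcal{R}$ is finite. $L:\mathbb{R}^d\to\mathbb{R}^{\mathcal{Y}}_+$ is polyhedral if each coordinate $u\mapsto L(u)_y$ is a pointwise maximum of finitely many affine functions. $L$ is minimizable if $\inf_r\langle p,L(r)\rangle$ is attained for all $p$; then $\mathrm{prop}[L](p)=\arg\min_r\langle p,L(r)\rangle$. $\mathcal{S}\subseteq\mathcal{R}$ is representative for minimizable $L$ if $\mathrm{prop}[L](p)\cap\mathcal{S}\neq\emptyset$ for all $p\in\Delta_{\mathcal{Y}}$. A minimizable $L:\mathbb{R}^d\to\mathbb{R}^{\mathcal{Y}}_+$ embeds $\ell$ if there exist a representative set $\mathcal{S}$ for $\ell$ and an injective $\varphi:\mathcal{S}\to\mathbb{R}^d$ with (i) $L(\varphi(r))=\ell(r)$ for all $r\in\mathcal{S}$ and (ii) for all $p$ and $r\in\mathcal{S}$: $r\in\mathrm{prop}[\ell](p)\iff\varphi(r)\in\mathrm{prop}[L](p)$. *)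

theory Defs
  imports Main Complex_Main
begin

definition simplex :: "('y::finite \<Rightarrow> real) set" where
  "simplex = {p. (\<forall>y. 0 \<le> p y) \<and> (\<Sum>y\<in>UNIV. p y) = 1}"

definition exp_loss :: "('y::finite \<Rightarrow> real) \<Rightarrow> ('y \<Rightarrow> real) \<Rightarrow> real" where
  "exp_loss p v = (\<Sum>y\<in>UNIV. p y * v y)"

definition is_loss :: "'r set \<Rightarrow> ('r \<Rightarrow> 'y \<Rightarrow> real) \<Rightarrow> bool" where
  "is_loss Dom loss \<longleftrightarrow> (\<forall>r\<in>Dom. \<forall>y. 0 \<le> loss r y)"

definition prop_on :: "'r set \<Rightarrow> ('r \<Rightarrow> 'y::finite \<Rightarrow> real) \<Rightarrow> ('y \<Rightarrow> real) \<Rightarrow> 'r set" where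
  "prop_on Dom loss p = {r\<in>Dom. \<forall>r'\<in>Dom. exp_loss p (loss r) \<le> exp_loss p (loss r')}"

definition minimizable :: "'r set \<Rightarrow> ('r \<Rightarrow> 'y::finite \<Rightarrow> real) \<Rightarrow> bool" where
  "minimizable Dom loss \<longleftrightarrow> (\<forall>p\<in>simplex. \<exists>r\<in>Dom. \<forall>r'\<in>Dom. exp_loss p (loss r) \<le> exp_loss p (loss r'))"

definition representative :: "'r set \<Rightarrow> ('r \<Rightarrow> 'y::finite \<Rightarrow> real) \<Rightarrow> 'r set \<Rightarrow> bool" where
  "representative Dom loss S \<longleftrightarrow> S \<subseteq> Dom \<and> (\<forall>p\<in>simplex. prop_on Dom loss p \<inter> S \<noteq> {})"

text \<open>R^d is represented as functions nat => real vanishing at all indices >= d.\<close>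
definition Rn :: "nat \<Rightarrow> (nat \<Rightarrow> real) set" where
  "Rn d = {u. \<forall>i\<ge>d. u i = 0}"

definition polyhedral :: "nat \<Rightarrow> ((nat \<Rightarrow> real) \<Rightarrow> 'y \<Rightarrow> real) \<Rightarrow> bool" where
  "polyhedral d L \<longleftrightarrow> (\<forall>y. \<exists>k::nat. \<exists>A::nat \<Rightarrow> nat \<Rightarrow> real. \<exists>B::nat \<Rightarrow> real. 0 < k \<and>
      (\<forall>u\<in>Rn d. L u y = Max {(\<Sum>i<d. A j i * u i) + B j | j. j < k}))"

definition embeds :: "nat \<Rightarrow> ((nat \<Rightarrow> real) \<Rightarrow> 'y::finite \<Rightarrow> real) \<Rightarrow> 'r set \<Rightarrow> ('r \<Rightarrow> 'y \<Rightarrow> real) \<Rightarrow> bool" where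
  "embeds d L R l \<longleftrightarrow> minimizable (Rn d) L \<and>
     (\<exists>S \<phi>. representative R l S \<and> inj_on \<phi> S \<and> \<phi> ` S \<subseteq> Rn d \<and>
        (\<forall>r\<in>S. L (\<phi> r) = l r) \<and>
        (\<forall>p\<in>simplex. \<forall>r\<in>S. r \<in> prop_on R l p \<longleftrightarrow> \<phi> r \<in> prop_on (Rn d) L p))"

end

theory Submission
  imports Defs
begin

definition hpen :: "nat \<Rightarrow> nat \<Rightarrow> (nat \<Rightarrow> real) \<Rightarrow> real" where
  "hpen n j u = (if j < n then - u j else if j = n then 0
     else if j = n+1 then 1 - (\<Sum>i<n. u i) else if j = n+2 then (\<Sum>i<n. u i) - 1 else 0)"

definition coefA :: "nat \<Rightarrow> real \<Rightarrow> (nat \<Rightarrow> 'y \<Rightarrow> real) \<Rightarrow> 'y \<Rightarrow> nat \<Rightarrow> nat \<Rightarrow> real" where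
  "coefA n C a y j i = a i y + C * (if j < n then (if i = j then -1 else 0)
     else if j = n then 0 else if j = n+1 then -1 else if j = n+2 then 1 else 0)"

definition coefB :: "nat \<Rightarrow> real \<Rightarrow> nat \<Rightarrow> real" where
  "coefB n C j = (if j = n+1 then C else if j = n+2 then -C else 0)"

definition Lc :: "nat \<Rightarrow> real \<Rightarrow> (nat \<Rightarrow> 'y \<Rightarrow> real) \<Rightarrow> (nat \<Rightarrow> real) \<Rightarrow> 'y \<Rightarrow> real" where
  "Lc n C a u y = Max {(\<Sum>i<n. coefA n C a y j i * u i) + coefB n C j | j. j < n+3}"

lemma piece_eq:
  "(\<Sum>i<n. coefA n C a y j i * u i) + coefB n C j = (\<Sum>i<n. u i * a i y) + C * hpen n j u"
proof -
  have s: "(\<Sum>i<n. coefA n C a y j i * u i) = (\<Sum>i<n. u i * a i y) +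
     C * (\<Sum>i<n. (if j < n then (if i = j then -1 else 0)
     else if j = n then 0 else if j = n+1 then -1 else if j = n+2 then 1 else 0) * u i)"
    by (simp add: coefA_def algebra_simps sum.distrib sum_distrib_left)
  show ?thesis
  proof (cases "j < n")
    case True
    have "(\<Sum>i<n. (if i = j then -1 else 0) * u i) = (\<Sum>i<n. (if i = j then - u j else 0))"
      by (rule sum.cong) auto
    also have "\<dots> = - u j" using True by (simp add: sum.delta)
    finally show ?thesis using True s by (simp add: hpen_def coefB_def)
  next
    case False
    then show ?thesis using s
      by (auto simp: hpen_def coefB_def sum_negf algebra_simps)
  qed
qed

lemma fin_pieces: "finite {f j | j. j < (m::nat)}"
  by simp

lemma Lc_ge:
  assumes "j < n+3"
  shows "(\<Sum>i<n. u i * a i y) + C * hpen n j u \<le> Lc n C a u y"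
  unfolding Lc_def piece_eq[symmetric]
  by (rule Max_ge) (use assms in auto)

lemma Lc_unit:
  assumes "k < n" "0 \<le> C"
  shows "Lc n C a (\<lambda>i. if i = k then 1 else 0) y = a k y"
  unfolding Lc_def piece_eq
proof (rule Max_eqI)
  have sm: "(\<Sum>i<n. (if i = k then 1 else 0) * a i y) = a k y"
  proof -
    have "(\<Sum>i<n. (if i = k then 1 else 0) * a i y) = (\<Sum>i<n. if i = k then a k y else 0)"
      by (rule sum.cong) auto
    then show ?thesis using assms by (simp add: sum.delta)
  qed
  have s1: "(\<Sum>i<n. (if i = k then 1 else (0::real))) = 1"
    using assms by (simp add: sum.delta)
  show "finite {(\<Sum>i<n. (if i = k then 1 else 0) * a i y) + C * hpen n j (\<lambda>i. if i = k then 1 else 0) |j. j < n + 3}"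
    by simp
  show "\<And>z. z \<in> {(\<Sum>i<n. (if i = k then 1 else 0) * a i y) + C * hpen n j (\<lambda>i. if i = k then 1 else 0) |j. j < n + 3} \<Longrightarrow> z \<le> a k y"
    using assms sm s1 by (auto simp: hpen_def)
  show "a k y \<in> {(\<Sum>i<n. (if i = k then 1 else 0) * a i y) + C * hpen n j (\<lambda>i. if i = k then 1 else 0) |j. j < n + 3}"
    using sm by (auto simp: hpen_def intro!: exI[of _ n])
qed

lemma core:
  fixes a u :: "nat \<Rightarrow> real"
  assumes "\<forall>i<n. m \<le> a i" "\<forall>i<n. a i \<le> M" "0 \<le> m" "0 \<le> D"
    "\<forall>i<n. - u i \<le> D" "1 - (\<Sum>i<n. u i) \<le> D" "(real n + 1) * M \<le> C" and M0: "m \<le> M"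
  shows "m \<le> (\<Sum>i<n. u i * a i) + C * D"
proof -
  have t: "\<forall>i<n. u i * a i \<ge> u i * m - D * M"
  proof (intro allI impI)
    fix i assume i: "i < n"
    have "u i * (a i - m) \<ge> - D * (a i - m)"
      using assms i by (intro mult_right_mono) auto
    moreover have "D * (a i - m) \<le> D * M" using assms i by (intro mult_left_mono) auto
    ultimately show "u i * a i \<ge> u i * m - D * M" by (simp add: algebra_simps)
  qed
  have "(\<Sum>i<n. u i * a i) \<ge> (\<Sum>i<n. u i * m - D * M)"
    using t by (intro sum_mono) auto
  also have "(\<Sum>i<n. u i * m - D * M) = m * (\<Sum>i<n. u i) - real n * D * M"
    by (simp add: sum_subtractf sum_distrib_left algebra_simps)
  finally have A: "(\<Sum>i<n. u i * a i) \<ge> m * (\<Sum>i<n. u i) - real n * D * M" .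
  have B: "m * (\<Sum>i<n. u i) \<ge> m * (1 - D)" using assms by (intro mult_left_mono) auto
  have Cc: "C * D \<ge> (real n + 1) * M * D" using assms by (intro mult_right_mono) auto
  have "m * D \<le> M * D" using M0 assms by (intro mult_right_mono) auto
  then show ?thesis using A B Cc by (simp add: algebra_simps)
qed

lemma exp_loss_lb:
  assumes p: "p \<in> simplex" and C: "(real n + 1) * M \<le> C" and C0: "0 \<le> C"
    and bnd: "\<forall>i<n. m \<le> exp_loss p (a i) \<and> exp_loss p (a i) \<le> M"
    and m0: "0 \<le> m" and mM: "m \<le> M"
  shows "m \<le> exp_loss p (Lc n C a u)"
proof -
  define D where "D = Max {hpen n j u | j. j < n+3}"
  have fin: "finite {hpen n j u | j. j < n+3}" by simp
  have "D \<in> {hpen n j u | j. j < n+3}" unfolding D_def by (rule Max_in[OF fin]) (auto intro: exI[of _ n])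
  then obtain j0 where j0: "j0 < n+3" "hpen n j0 u = D" by auto
  have Dge: "hpen n j u \<le> D" if "j < n+3" for j
    unfolding D_def by (rule Max_ge[OF fin]) (use that in auto)
  have D0: "0 \<le> D" using Dge[of n] by (simp add: hpen_def)
  have Du: "\<forall>i<n. - u i \<le> D"
  proof (intro allI impI)
    fix i assume "i < n" then show "- u i \<le> D" using Dge[of i] by (simp add: hpen_def)
  qed
  have Ds: "1 - (\<Sum>i<n. u i) \<le> D" using Dge[of "n+1"] by (simp add: hpen_def)
  have p0: "\<forall>y. 0 \<le> p y" and p1: "(\<Sum>y\<in>UNIV. p y) = 1" using p by (auto simp: simplex_def)
  have "(\<Sum>y\<in>UNIV. p y * ((\<Sum>i<n. u i * a i y) + C * D)) \<le> (\<Sum>y\<in>UNIV. p y * Lc n C a u y)"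
    by (intro sum_mono mult_left_mono) (use Lc_ge[OF j0(1)] j0(2) p0 in auto)
  moreover have "(\<Sum>y\<in>UNIV. p y * ((\<Sum>i<n. u i * a i y) + C * D))
      = (\<Sum>i<n. u i * exp_loss p (a i)) + C * D"
  proof -
    have "(\<Sum>y\<in>UNIV. p y * ((\<Sum>i<n. u i * a i y) + C * D))
      = (\<Sum>y\<in>UNIV. (\<Sum>i<n. u i * (p y * a i y))) + (\<Sum>y\<in>UNIV. p y) * (C * D)"
      by (simp add: algebra_simps sum.distrib sum_distrib_left sum_distrib_right)
    also have "\<dots> = (\<Sum>i<n. u i * exp_loss p (a i)) + C * D"
      using p1 by (simp add: exp_loss_def sum_distrib_left sum.swap[of _ UNIV])
    finally show ?thesis .
  qed
  moreover have "m \<le> (\<Sum>i<n. u i * exp_loss p (a i)) + C * D"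
    by (rule core[OF _ _ m0 D0 Du Ds C mM]) (use bnd in auto)
  ultimately show ?thesis by (simp add: exp_loss_def)
qed

theorem theorem4:
  fixes R :: "'r set" and l :: "'r \<Rightarrow> 'y::finite \<Rightarrow> real"
  assumes "finite R" and "R \<noteq> {}" and "is_loss R l"
  shows "\<exists>d::nat. \<exists>L :: (nat \<Rightarrow> real) \<Rightarrow> 'y \<Rightarrow> real.
           is_loss (Rn d) L \<and> polyhedral d L \<and> embeds d L R l"
proof -
  define n where "n = card R"
  obtain f where f: "bij_betw f {0..<n} R" using ex_bij_betw_nat_finite[OF assms(1)] n_def by blast
  define g where "g = inv_into {0..<n} f"
  have g: "bij_betw g R {0..<n}" unfolding g_def by (rule bij_betw_inv_into[OF f])
  have fg: "f (g r) = r" if "r \<in> R" for r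
    unfolding g_def using f that by (simp add: bij_betw_inv_into_right)
  have gn: "g r < n" if "r \<in> R" for r using g that by (auto simp: bij_betw_def)
  have fR: "f i \<in> R" if "i < n" for i using f that by (auto simp: bij_betw_def)
  define a where "a i = l (f i)" for i
  define e :: "nat \<Rightarrow> nat \<Rightarrow> real" where "e k = (\<lambda>i. if i = k then 1 else 0)" for k
  define M where "M = Max ((\<lambda>(r,y). l r y) ` (R \<times> UNIV))"
  have finM: "finite ((\<lambda>(r,y). l r y) ` (R \<times> UNIV))" using assms(1) by simp
  have lM: "l r y \<le> M" if "r \<in> R" for r y
    unfolding M_def by (rule Max_ge[OF finM]) (use that in force)
  have l0: "0 \<le> l r y" if "r \<in> R" for r y using assms(3) that by (auto simp: is_loss_def)
  obtain r1 where r1: "r1 \<in> R" using assms(2) by blast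
  have M0: "0 \<le> M" using l0[OF r1] lM[OF r1] order_trans by blast
  define C where "C = (real n + 1) * M"
  have C0: "0 \<le> C" unfolding C_def using M0 by simp
  define L where "L = Lc n C a"
  define \<phi> where "\<phi> r = e (g r)" for r
  have Lphi: "L (\<phi> r) = l r" if "r \<in> R" for r
  proof
    fix y show "L (\<phi> r) y = l r y"
      using Lc_unit[OF gn[OF that] C0, of a y] fg[OF that] unfolding L_def \<phi>_def e_def a_def by simp
  qed
  have phiRn: "\<phi> r \<in> Rn n" if "r \<in> R" for r
    using gn[OF that] by (auto simp: Rn_def \<phi>_def e_def)
  have expbnd: "0 \<le> exp_loss p (l r) \<and> exp_loss p (l r) \<le> M" if "p \<in> simplex" "r \<in> R" for p r
  proof -
    have p0: "\<forall>y. 0 \<le> p y" and p1: "(\<Sum>y\<in>UNIV. p y) = 1" using that by (auto simp: simplex_def)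
    have "0 \<le> exp_loss p (l r)" unfolding exp_loss_def using p0 l0[OF that(2)] by (auto intro: sum_nonneg)
    moreover have "exp_loss p (l r) \<le> (\<Sum>y\<in>UNIV. p y * M)" unfolding exp_loss_def
      by (intro sum_mono mult_left_mono) (use p0 lM[OF that(2)] in auto)
    moreover have "(\<Sum>y\<in>UNIV. p y * M) = M" using p1 by (simp add: sum_distrib_right[symmetric])
    ultimately show ?thesis by simp
  qed
  have lb: "exp_loss p (l r0) \<le> exp_loss p (L u)"
    if p: "p \<in> simplex" and r0: "r0 \<in> R" "\<forall>r\<in>R. exp_loss p (l r0) \<le> exp_loss p (l r)" for p r0 u
    unfolding L_def
    by (rule exp_loss_lb[OF p _ C0]) (use r0 fR expbnd[OF p] in \<open>auto simp: C_def a_def\<close>)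
  have exmin: "\<exists>r0\<in>R. \<forall>r\<in>R. exp_loss p (l r0) \<le> exp_loss p (l r)" for p
  proof -
    have "Min ((\<lambda>r. exp_loss p (l r)) ` R) \<in> (\<lambda>r. exp_loss p (l r)) ` R"
      using assms(1,2) by (intro Min_in) auto
    then obtain r0 where "r0 \<in> R" "exp_loss p (l r0) = Min ((\<lambda>r. exp_loss p (l r)) ` R)" by auto
    then show ?thesis using assms(1) by (intro bexI[of _ r0]) auto
  qed
  have isl: "is_loss (Rn n) L"
    unfolding is_loss_def
  proof (intro ballI allI)
    fix u y
    define p :: "'y \<Rightarrow> real" where "p = (\<lambda>z. if z = y then 1 else 0)"
    have p: "p \<in> simplex" by (simp add: simplex_def p_def)
    have ev: "exp_loss p v = v y" for v
    proof -
      have "exp_loss p v = (\<Sum>z\<in>UNIV. if z = y then v y else 0)"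
        unfolding exp_loss_def p_def by (rule sum.cong) auto
      then show ?thesis by simp
    qed
    obtain r0 where "r0 \<in> R" "\<forall>r\<in>R. exp_loss p (l r0) \<le> exp_loss p (l r)" using exmin by blast
    then have "exp_loss p (l r0) \<le> exp_loss p (L u)" using lb[OF p] by blast
    then show "0 \<le> L u y" using expbnd[OF p \<open>r0 \<in> R\<close>] ev by simp
  qed
  have poly: "polyhedral n L"
    unfolding polyhedral_def L_def Lc_def
    by (intro allI exI[of _ "n+3"] exI[of _ "\<lambda>j i. coefA n C a _ j i"] exI[of _ "coefB n C"]) auto
  have mini: "minimizable (Rn n) L"
    unfolding minimizable_def
  proof
    fix p :: "'y \<Rightarrow> real" assume p: "p \<in> simplex"
    obtain r0 where r0: "r0 \<in> R" "\<forall>r\<in>R. exp_loss p (l r0) \<le> exp_loss p (l r)" using exmin by blast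
    show "\<exists>r\<in>Rn n. \<forall>r'\<in>Rn n. exp_loss p (L r) \<le> exp_loss p (L r')"
      using phiRn[OF r0(1)] Lphi[OF r0(1)] lb[OF p r0] by (intro bexI[of _ "\<phi> r0"]) auto
  qed
  have repr: "representative R l R"
    unfolding representative_def prop_on_def using exmin by blast
  have inj: "inj_on \<phi> R"
  proof (rule inj_onI)
    fix r r' assume "r \<in> R" "r' \<in> R" "\<phi> r = \<phi> r'"
    then have "\<phi> r (g r) = \<phi> r' (g r)" by simp
    then have "g r = g r'" by (simp add: \<phi>_def e_def split: if_splits)
    then show "r = r'" using fg \<open>r \<in> R\<close> \<open>r' \<in> R\<close> by metis
  qed
  have corr: "\<forall>p\<in>simplex. \<forall>r\<in>R. r \<in> prop_on R l p \<longleftrightarrow> \<phi> r \<in> prop_on (Rn n) L p"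
  proof (intro ballI iffI)
    fix p r assume p: "p \<in> simplex" and r: "r \<in> R" and rp: "r \<in> prop_on R l p"
    then show "\<phi> r \<in> prop_on (Rn n) L p"
      using lb[OF p r] phiRn[OF r] Lphi[OF r] by (auto simp: prop_on_def)
  next
    fix p r assume p: "p \<in> simplex" and r: "r \<in> R" and rp: "\<phi> r \<in> prop_on (Rn n) L p"
    have "exp_loss p (l r) \<le> exp_loss p (l r')" if "r' \<in> R" for r'
      using rp phiRn[OF that] Lphi[OF that] Lphi[OF r] unfolding prop_on_def by force
    then show "r \<in> prop_on R l p" using r by (auto simp: prop_on_def)
  qed
  have "embeds n L R l"
    unfolding embeds_def using mini repr inj phiRn Lphi corr by blast
  then show ?thesis using isl poly by blast
qed

end
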